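(* Let $m\ge1$, $\alpha\in(0,1)$, let $F_1,\dots,F_m:[0,1]\to[0,1]$ and fix $t\in[0,1]$. Let $(F(t))_{(1)}\ge\dots\ge(F(t))_{(m)}$ denote the values $F_1(t),\dots,F_m(t)$ sorted decreasingly and, for $1\le j\le m$, $\tilde F_j(t)=1-\big(\prod_{j'=1}^{j}(1-(F(t))_{(j')})\big)^{1/j}$. For $\ell\in\{1,\dots,m\}$ and $i\in\{1,\dots,\lfloor\alpha\ell\rfloor+1\}$ consider $$Q(\ell,i)=P\Big(\mathbf{Bin}\big[m-\ell+i,\tilde F_{m-\ell+i}(t)\big]\ge i\Big)=P\Big(\mathbf{Bin}\big[m-\ell+i,1-\tilde F_{m-\ell+i}(t)\big]\le m-\ell\Big).$$ Then $Q(\ell,i)$ is non-increasing in $i\in\{1,\dots,\lfloor\alpha\ell\rfloor+1\}$ and non-increasing in $\ell\in\{1,\dots,m\}$.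
   Context: $\mathbf{Bin}[n,p]$ denotes a binomial random variable with $n$ trials and success probability $p$. *)

theory Defs
  imports "HOL-Probability.Probability"
begin

definition sorted_F :: "(nat \<Rightarrow> real \<Rightarrow> real) \<Rightarrow> nat \<Rightarrow> real \<Rightarrow> nat \<Rightarrow> real" where
  "sorted_F F m t j = rev (sort (map (\<lambda>i. F i t) [1..<m+1])) ! (j - 1)"

definition tilde_F :: "(nat \<Rightarrow> real \<Rightarrow> real) \<Rightarrow> nat \<Rightarrow> real \<Rightarrow> nat \<Rightarrow> real" where
  "tilde_F F m t j = 1 - root j (\<Prod>j'=1..j. 1 - sorted_F F m t j')"

definition Q :: "(nat \<Rightarrow> real \<Rightarrow> real) \<Rightarrow> nat \<Rightarrow> real \<Rightarrow> nat \<Rightarrow> nat \<Rightarrow> real" where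
  "Q F m t l i = measure_pmf.prob (binomial_pmf (m - l + i) (tilde_F F m t (m - l + i))) {i..}"

end

theory Submission
  imports Defs
begin

fun ptail :: "real list \<Rightarrow> nat \<Rightarrow> real" where
  "ptail [] i = (if i = 0 then 1 else 0)"
| "ptail (p#ps) 0 = 1"
| "ptail (p#ps) (Suc i) = p * ptail ps i + (1-p) * ptail ps (Suc i)"

lemma ptail_0[simp]: "ptail ps 0 = 1"
  by (cases ps) auto

lemma ptail_range: "\<forall>p\<in>set ps. 0 \<le> p \<and> p \<le> 1 \<Longrightarrow> 0 \<le> ptail ps i \<and> ptail ps i \<le> 1"
proof (induction ps arbitrary: i)
  case Nil then show ?case by auto
next
  case (Cons p ps)
  show ?case
  proof (cases i)
    case 0 then show ?thesis by simp
  next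
    case (Suc k)
    have p: "0 \<le> p" "p \<le> 1" using Cons.prems by auto
    have a: "0 \<le> ptail ps k" "ptail ps k \<le> 1" "0 \<le> ptail ps (Suc k)" "ptail ps (Suc k) \<le> 1"
      using Cons.IH Cons.prems by auto
    have "p * ptail ps k + (1-p) * ptail ps (Suc k) \<le> p * 1 + (1-p) * 1"
      by (intro add_mono mult_left_mono) (use p a in auto)
    then show ?thesis using Suc p a by simp
  qed
qed

lemma ptail_antimono: "\<forall>p\<in>set ps. 0 \<le> p \<and> p \<le> 1 \<Longrightarrow> ptail ps (Suc i) \<le> ptail ps i"
proof (induction ps arbitrary: i)
  case Nil then show ?case by auto
next
  case (Cons p ps)
  have p: "0 \<le> p" "p \<le> 1" using Cons.prems by auto
  show ?case
  proof (cases i)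
    case 0 then show ?thesis using ptail_range[OF Cons.prems, of 1] by simp
  next
    case (Suc k)
    have a: "ptail ps (Suc k) \<le> ptail ps k" "ptail ps (Suc (Suc k)) \<le> ptail ps (Suc k)"
      using Cons.IH Cons.prems by auto
    have "p * ptail ps (Suc k) + (1-p) * ptail ps (Suc (Suc k)) \<le> p * ptail ps k + (1-p) * ptail ps (Suc k)"
      by (intro add_mono mult_left_mono) (use p a in auto)
    then show ?thesis using Suc by simp
  qed
qed

lemma ptail_mono_list:
  "list_all2 (\<le>) ps qs \<Longrightarrow> \<forall>p\<in>set ps. 0 \<le> p \<and> p \<le> 1 \<Longrightarrow> \<forall>p\<in>set qs. 0 \<le> p \<and> p \<le> 1
   \<Longrightarrow> ptail ps i \<le> ptail qs i"
proof (induction ps qs arbitrary: i rule: list_all2_induct)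
  case Nil then show ?case by simp
next
  case (Cons p ps q qs)
  show ?case
  proof (cases i)
    case 0 then show ?thesis by simp
  next
    case (Suc k)
    have p: "0 \<le> p" "p \<le> q" "q \<le> 1" using Cons by auto
    have a: "ptail ps k \<le> ptail qs k" "ptail ps (Suc k) \<le> ptail qs (Suc k)"
      using Cons by auto
    have d: "ptail qs (Suc k) \<le> ptail qs k" using ptail_antimono Cons.prems by auto
    have "p * ptail ps k + (1-p) * ptail ps (Suc k) \<le> p * ptail qs k + (1-p) * ptail qs (Suc k)"
      by (intro add_mono mult_left_mono) (use p a in auto)
    also have "\<dots> = ptail qs (Suc k) + p * (ptail qs k - ptail qs (Suc k))" by algebra
    also have "\<dots> \<le> ptail qs (Suc k) + q * (ptail qs k - ptail qs (Suc k))"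
      using p d by (intro add_left_mono mult_right_mono) auto
    also have "\<dots> = q * ptail qs k + (1-q) * ptail qs (Suc k)" by algebra
    finally show ?thesis using Suc by simp
  qed
qed

lemma ptail_swap: "ptail (a#b#R) i = ptail (b#a#R) i"
  apply (cases i)
   apply simp
  subgoal for k by (cases k) (auto simp: algebra_simps)
  done

lemma ptail_remove1: "x \<in> set ys \<Longrightarrow> ptail ys i = ptail (x # remove1 x ys) i"
proof (induction ys arbitrary: i)
  case Nil then show ?case by simp
next
  case (Cons y ys)
  show ?case
  proof (cases "x = y")
    case True then show ?thesis by simp
  next
    case False
    then have xs: "x \<in> set ys" using Cons.prems by simp
    have "ptail (y # ys) i = ptail (y # x # remove1 x ys) i"
      by (cases i) (simp_all add: Cons.IH[OF xs])
    also have "\<dots> = ptail (x # y # remove1 x ys) i" by (rule ptail_swap)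
    finally show ?thesis using False by simp
  qed
qed

lemma ptail_perm: "mset xs = mset ys \<Longrightarrow> ptail xs i = ptail ys i"
proof (induction xs arbitrary: ys i)
  case Nil then show ?case by simp
next
  case (Cons x xs)
  have xs: "x \<in> set ys" using Cons.prems by (metis list.set_intros(1) set_mset_mset)
  have m: "mset xs = mset (remove1 x ys)" using Cons.prems[symmetric] by simp
  have "ptail ys i = ptail (x # remove1 x ys) i" by (rule ptail_remove1[OF xs])
  also have "\<dots> = ptail (x # xs) i"
    by (cases i) (simp_all add: Cons.IH[OF m])
  finally show ?case by simp
qed

lemma ptail_transfer:
  assumes "0 \<le> a" "a \<le> 1" "0 \<le> b" "b \<le> 1" "(1-a)*(1-b) = (1-c)*(1-d)" "a*b \<le> c*d"
    and R: "\<forall>p\<in>set R. 0 \<le> p \<and> p \<le> 1"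
  shows "ptail (a#b#R) i \<le> ptail (c#d#R) i"
proof (cases i)
  case 0 then show ?thesis by simp
next
  case (Suc k)
  show ?thesis
  proof (cases k)
    case 0
    have "ptail (a#b#R) i = 1 - (1-a)*(1-b) + (1-a)*(1-b) * ptail R 1"
      using Suc 0 by (simp add: algebra_simps)
    moreover have "ptail (c#d#R) i = 1 - (1-c)*(1-d) + (1-c)*(1-d) * ptail R 1"
      using Suc 0 by (simp add: algebra_simps)
    ultimately show ?thesis using assms by simp
  next
    case (Suc j)
    have e: "ptail (x#y#R) i = x*y * (ptail R j - ptail R (Suc j)) + (1 - (1-x)*(1-y)) * ptail R (Suc j)
        + (1-x)*(1-y) * ptail R (Suc (Suc j))" for x y
      using \<open>i = Suc k\<close> Suc by (simp add: algebra_simps)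
    have d: "ptail R (Suc j) \<le> ptail R j" using ptail_antimono[OF R] .
    have "a*b * (ptail R j - ptail R (Suc j)) \<le> c*d * (ptail R j - ptail R (Suc j))"
      using d assms by (intro mult_right_mono) auto
    then show ?thesis unfolding e using assms(5) by simp
  qed
qed


lemma bin_rec:
  assumes p: "0 \<le> p" "p \<le> 1"
  shows "measure_pmf.prob (binomial_pmf (Suc n) p) {Suc i..} =
     p * measure_pmf.prob (binomial_pmf n p) {i..} + (1-p) * measure_pmf.prob (binomial_pmf n p) {Suc i..}"
proof -
  have e: "binomial_pmf (Suc n) p = bernoulli_pmf p \<bind> (\<lambda>b. map_pmf (\<lambda>k. (if b then 1 else 0) + k) (binomial_pmf n p))"
    using p by (subst binomial_pmf_Suc) (auto simp: map_pmf_def)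
  have v1: "(+) (Suc 0) -` {Suc i..} = {i..}" "(+) (0::nat) -` {Suc i..} = {Suc i..}" by auto
  have "emeasure (measure_pmf (binomial_pmf (Suc n) p)) {Suc i..} =
      emeasure (measure_pmf (binomial_pmf n p)) {i..} * ennreal p + emeasure (measure_pmf (binomial_pmf n p)) {Suc i..} * ennreal (1-p)"
    unfolding e using p by (simp add: v1)
  then have "ennreal (measure_pmf.prob (binomial_pmf (Suc n) p) {Suc i..}) =
      ennreal (measure_pmf.prob (binomial_pmf n p) {i..} * p + measure_pmf.prob (binomial_pmf n p) {Suc i..} * (1-p))"
    using p by (subst ennreal_plus) (auto simp: measure_pmf.emeasure_eq_measure ennreal_mult)
  moreover have "0 \<le> measure_pmf.prob (binomial_pmf n p) {i..} * p + measure_pmf.prob (binomial_pmf n p) {Suc i..} * (1-p)"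
    using p by (intro add_nonneg_nonneg mult_nonneg_nonneg) auto
  ultimately show ?thesis using p by (simp add: algebra_simps)
qed

lemma bin_ptail:
  assumes p: "0 \<le> p" "p \<le> 1"
  shows "measure_pmf.prob (binomial_pmf n p) {i..} = ptail (replicate n p) i"
proof (induction n arbitrary: i)
  case 0
  show ?case using p by (simp add: binomial_pmf_0 indicator_def)
next
  case (Suc n)
  show ?case
  proof (cases i)
    case 0 then show ?thesis by simp
  next
    case (Suc k)
    then show ?thesis using bin_rec[OF p, of n k] Suc.IH by simp
  qed
qed


lemma pow01: "0 \<le> (s::real) \<Longrightarrow> s \<le> 1 \<Longrightarrow> 0 \<le> 1 - s^j \<and> 1 - s^j \<le> 1 \<and> s * s^j \<le> 1 \<and> 0 \<le> s * s^j"
  using power_le_one[of s "Suc j"] by (simp add: power_le_one)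

lemma ptail_zero_cons: "ptail (0 # R) i = ptail R i"
  by (cases i) auto

lemma chain:
  assumes s: "0 \<le> s" "s \<le> 1" and k: "k \<le> N"
  shows "ptail (replicate N (1-s^(N+1))) i \<le>
     ptail ((1-s^k) # replicate (N-k) (1-s^(N+1)) @ replicate k (1-s^N)) i"
  using k
proof (induction k)
  case 0 then show ?case by (simp add: ptail_zero_cons)
next
  case (Suc k)
  let ?P = "1-s^(N+1)" and ?V = "1-s^N"
  have Nk: "N - k = Suc (N - Suc k)" using Suc.prems by simp
  have R: "\<forall>p\<in>set (replicate (N - Suc k) ?P @ replicate k ?V). 0 \<le> p \<and> p \<le> 1"
    using pow01[OF s] by auto
  have "ptail (replicate N ?P) i \<le> ptail ((1-s^k) # replicate (N-k) ?P @ replicate k ?V) i"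
    using Suc by simp
  also have "\<dots> = ptail ((1-s^k) # ?P # (replicate (N - Suc k) ?P @ replicate k ?V)) i"
    by (simp add: Nk)
  also have "\<dots> \<le> ptail ((1-s^Suc k) # ?V # (replicate (N - Suc k) ?P @ replicate k ?V)) i"
  proof (rule ptail_transfer[OF _ _ _ _ _ _ R])
    show "(1 - (1 - s ^ k)) * (1 - ?P) = (1 - (1 - s ^ Suc k)) * (1 - ?V)"
      by (simp add: power_add[symmetric] algebra_simps)
    have "s^N \<le> s^k" using Suc.prems s by (intro power_decreasing) auto
    then have "s^N * (1-s) \<le> s^k * (1-s)" using s by (intro mult_right_mono) auto
    then show "(1 - s ^ k) * ?P \<le> (1 - s ^ Suc k) * ?V"
      by (simp add: algebra_simps power_add[symmetric])
  qed (use pow01[OF s] in auto)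
  also have "\<dots> = ptail ((1-s^Suc k) # replicate (N - Suc k) ?P @ replicate (Suc k) ?V) i"
    by (rule ptail_perm) simp
  finally show ?case .
qed

lemma chain_full:
  assumes s: "0 \<le> s" "s \<le> 1"
  shows "ptail (replicate N (1-s^(N+1))) i \<le> ptail (replicate (Suc N) (1-s^N)) i"
  using chain[OF s order_refl, of N i] by (simp add: replicate_append_same[symmetric])


lemma sF_range:
  assumes F: "\<forall>k\<in>{1..m}. \<forall>x\<in>{0..1}. 0 \<le> F k x \<and> F k x \<le> 1" and t: "0 \<le> t" "t \<le> 1"
    and j: "1 \<le> j" "j \<le> m"
  shows "0 \<le> sorted_F F m t j \<and> sorted_F F m t j \<le> 1"
proof -
  let ?xs = "map (\<lambda>i. F i t) [1..<m+1]"
  have "rev (sort ?xs) ! (j-1) \<in> set (rev (sort ?xs))" using j by (intro nth_mem) simp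
  then have "rev (sort ?xs) ! (j-1) \<in> set ?xs" by simp
  then obtain k where "k \<in> {1..<m+1}" "rev (sort ?xs) ! (j-1) = F k t"
    by (auto simp del: upt_Suc)
  then show ?thesis using F t unfolding sorted_F_def by auto
qed

lemma sF_anti:
  assumes j: "1 \<le> j" "j \<le> j'" "j' \<le> m"
  shows "sorted_F F m t j' \<le> sorted_F F m t j"
proof -
  let ?xs = "map (\<lambda>i. F i t) [1..<m+1]"
  have len: "length (sort ?xs) = m" by simp
  have "sort ?xs ! (m - Suc (j'-1)) \<le> sort ?xs ! (m - Suc (j-1))"
    using j by (intro sorted_nth_mono) auto
  then show ?thesis unfolding sorted_F_def using j by (simp add: rev_nth)
qed

definition GG :: "(nat \<Rightarrow> real \<Rightarrow> real) \<Rightarrow> nat \<Rightarrow> real \<Rightarrow> nat \<Rightarrow> real" where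
  "GG F m t n = (\<Prod>j'=1..n. 1 - sorted_F F m t j')"

lemma tilde_GG: "tilde_F F m t n = 1 - root n (GG F m t n)"
  unfolding tilde_F_def GG_def ..

lemma GG_Suc: "GG F m t (Suc n) = GG F m t n * (1 - sorted_F F m t (Suc n))"
  unfolding GG_def by simp

lemma GG_range:
  assumes F: "\<forall>k\<in>{1..m}. \<forall>x\<in>{0..1}. 0 \<le> F k x \<and> F k x \<le> 1" and t: "0 \<le> t" "t \<le> 1"
    and n: "n \<le> m"
  shows "0 \<le> GG F m t n \<and> GG F m t n \<le> 1"
  unfolding GG_def using sF_range[OF F t] n
  by (auto intro!: prod_nonneg prod_le_1)

lemma tilde_range:
  assumes F: "\<forall>k\<in>{1..m}. \<forall>x\<in>{0..1}. 0 \<le> F k x \<and> F k x \<le> 1" and t: "0 \<le> t" "t \<le> 1"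
    and n: "n \<le> m"
  shows "0 \<le> tilde_F F m t n \<and> tilde_F F m t n \<le> 1"
  using GG_range[OF F t n] unfolding tilde_GG
  by (cases "n = 0") (auto simp: real_root_ge_zero)

lemma tilde_anti:
  assumes F: "\<forall>k\<in>{1..m}. \<forall>x\<in>{0..1}. 0 \<le> F k x \<and> F k x \<le> 1" and t: "0 \<le> t" "t \<le> 1"
    and n: "1 \<le> n" "Suc n \<le> m"
  shows "tilde_F F m t (Suc n) \<le> tilde_F F m t n"
proof -
  define G where "G = GG F m t n"
  define a where "a = 1 - sorted_F F m t (Suc n)"
  have G: "0 \<le> G" "G \<le> 1" using GG_range[OF F t, of n] n unfolding G_def by auto
  have a: "0 \<le> a" "a \<le> 1" using sF_range[OF F t, of "Suc n"] n unfolding a_def by auto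
  have Ga: "G \<le> a ^ n"
  proof -
    have "G \<le> (\<Prod>j'=1..n. a)" unfolding G_def GG_def a_def
      using sF_range[OF F t] sF_anti[of _ "Suc n" m F t] n
      by (intro prod_mono) auto
    then show ?thesis by simp
  qed
  define x where "x = root n G"
  define y where "y = root (Suc n) (G * a)"
  have x: "0 \<le> x" "x ^ n = G" unfolding x_def using G n by (auto simp: real_root_pow_pos2)
  have y: "0 \<le> y" "y ^ Suc n = G * a" unfolding y_def using G a
    by (auto simp del: power_Suc)
  have "x ^ (n * Suc n) = G ^ Suc n" by (simp only: power_mult x(2))
  also have "\<dots> = G ^ n * G" by simp
  also have "\<dots> \<le> G ^ n * a ^ n" using Ga G by (intro mult_left_mono) auto
  also have "\<dots> = y ^ (n * Suc n)" by (simp only: mult.commute[of n "Suc n"] power_mult y(2) power_mult_distrib)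
  finally have le: "x ^ (n * Suc n) \<le> y ^ (n * Suc n)" .
  obtain k where k: "n * Suc n = Suc k" using n by (cases n) auto
  have "x \<le> y" by (rule power_le_imp_le_base[OF le[unfolded k] y(1)])
  then show ?thesis unfolding tilde_GG GG_Suc x_def y_def G_def a_def by linarith
qed


lemma Q_ptail:
  assumes F: "\<forall>k\<in>{1..m}. \<forall>x\<in>{0..1}. 0 \<le> F k x \<and> F k x \<le> 1" and t: "0 \<le> t" "t \<le> 1"
    and n: "m - l + i \<le> m"
  shows "Q F m t l i = ptail (replicate (m - l + i) (tilde_F F m t (m - l + i))) i"
  unfolding Q_def using tilde_range[OF F t n] by (intro bin_ptail) auto

lemma bound_lt:
  assumes "0 < \<alpha>" "\<alpha> < 1" "1 \<le> l"
  shows "nat \<lfloor>\<alpha> * real l\<rfloor> < l"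
proof -
  have "\<alpha> * real l < real l" using assms by simp
  then have "\<lfloor>\<alpha> * real l\<rfloor> < int l" by linarith
  moreover have "0 \<le> \<lfloor>\<alpha> * real l\<rfloor>" using assms by simp
  ultimately show ?thesis by (simp add: nat_less_iff)
qed

lemma step_i:
  assumes F: "\<forall>k\<in>{1..m}. \<forall>x\<in>{0..1}. 0 \<le> F k x \<and> F k x \<le> 1" and t: "0 \<le> t" "t \<le> 1"
    and a: "0 < \<alpha>" "\<alpha> < 1" and l: "1 \<le> l" "l \<le> m" and i: "1 \<le> i" "Suc i \<le> nat \<lfloor>\<alpha> * real l\<rfloor> + 1"
  shows "Q F m t l (Suc i) \<le> Q F m t l i"
proof -
  have il: "i < l" using bound_lt[OF a l(1)] i by linarith
  define n where "n = m - l + i"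
  have nS: "m - l + Suc i = Suc n" using l il unfolding n_def by simp
  have n: "1 \<le> n" "Suc n \<le> m" using l il i unfolding n_def by auto
  have r1: "0 \<le> tilde_F F m t (Suc n) \<and> tilde_F F m t (Suc n) \<le> 1" using tilde_range[OF F t n(2)] .
  have r2: "0 \<le> tilde_F F m t n \<and> tilde_F F m t n \<le> 1" using tilde_range[OF F t, of n] n by auto
  have "Q F m t l (Suc i) = ptail (replicate (Suc n) (tilde_F F m t (Suc n))) (Suc i)"
    using Q_ptail[OF F t, of l "Suc i"] nS n by simp
  also have "\<dots> \<le> ptail (replicate (Suc n) (tilde_F F m t n)) (Suc i)"
    using tilde_anti[OF F t n] r1 r2
    by (intro ptail_mono_list) (auto simp: list_all2_conv_all_nth simp del: replicate_Suc)
  also have "\<dots> \<le> ptail (replicate n (tilde_F F m t n)) i"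
  proof -
    let ?p = "tilde_F F m t n" and ?R = "replicate n (tilde_F F m t n)"
    have "ptail ?R (Suc i) \<le> ptail ?R i" using ptail_antimono[of ?R i] r2 by auto
    then have "(1 - ?p) * ptail ?R (Suc i) \<le> (1 - ?p) * ptail ?R i" using r2 by (intro mult_left_mono) auto
    then show ?thesis by (simp add: algebra_simps)
  qed
  also have "\<dots> = Q F m t l i"
    using Q_ptail[OF F t, of l i] n unfolding n_def by simp
  finally show ?thesis .
qed

lemma step_l:
  assumes F: "\<forall>k\<in>{1..m}. \<forall>x\<in>{0..1}. 0 \<le> F k x \<and> F k x \<le> 1" and t: "0 \<le> t" "t \<le> 1"
    and a: "0 < \<alpha>" "\<alpha> < 1" and l: "1 \<le> l" "Suc l \<le> m" and i: "1 \<le> i" "i \<le> nat \<lfloor>\<alpha> * real l\<rfloor> + 1"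
  shows "Q F m t (Suc l) i \<le> Q F m t l i"
proof -
  have il: "i \<le> l" using bound_lt[OF a l(1)] i by linarith
  define N where "N = m - Suc l + i"
  have nS: "m - l + i = Suc N" using l il unfolding N_def by simp
  have N: "1 \<le> N" "Suc N \<le> m" using l il i unfolding N_def by auto
  define u where "u = root N (GG F m t N)"
  define s where "s = root (Suc N) u"
  have G: "0 \<le> GG F m t N" "GG F m t N \<le> 1" using GG_range[OF F t, of N] N by auto
  have u: "0 \<le> u" "u \<le> 1" "u ^ N = GG F m t N" unfolding u_def using G N by (auto simp: real_root_ge_zero)
  have s: "0 \<le> s" "s \<le> 1" "s ^ Suc N = u" unfolding s_def using u
    by (auto simp: real_root_ge_zero simp del: power_Suc)
  have tN: "tilde_F F m t N = 1 - s ^ (N+1)" unfolding tilde_GG u_def[symmetric] using s by simp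
  define b where "b = 1 - sorted_F F m t (Suc N)"
  have b: "0 \<le> b" "b \<le> 1" using sF_range[OF F t, of "Suc N"] N unfolding b_def by auto
  have "root (Suc N) (GG F m t (Suc N)) = root (Suc N) (GG F m t N * b)"
    unfolding GG_Suc b_def ..
  also have "\<dots> \<le> root (Suc N) (GG F m t N)"
    using G b by (subst real_root_le_iff) (auto intro: mult_left_le)
  also have "GG F m t N = (s ^ N) ^ Suc N"
    by (simp only: u(3)[symmetric] s(3)[symmetric] power_mult[symmetric] mult.commute)
  also have "root (Suc N) \<dots> = s ^ N" using s by (intro real_root_power_cancel) auto
  finally have tS: "1 - s ^ N \<le> tilde_F F m t (Suc N)" unfolding tilde_GG by simp
  have r1: "0 \<le> tilde_F F m t (Suc N) \<and> tilde_F F m t (Suc N) \<le> 1" using tilde_range[OF F t N(2)] .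
  have "Q F m t (Suc l) i = ptail (replicate N (1 - s ^ (N+1))) i"
    using Q_ptail[OF F t, of "Suc l" i] N tN unfolding N_def by simp
  also have "\<dots> \<le> ptail (replicate (Suc N) (1 - s ^ N)) i"
    by (rule chain_full[OF s(1,2)])
  also have "\<dots> \<le> ptail (replicate (Suc N) (tilde_F F m t (Suc N))) i"
    using tS r1 pow01[OF s(1,2), of N]
    by (intro ptail_mono_list) (auto simp: list_all2_conv_all_nth simp del: replicate_Suc)
  also have "\<dots> = Q F m t l i"
    using Q_ptail[OF F t, of l i] N nS by simp
  finally show ?thesis .
qed


theorem lemma7p2:
  fixes F :: "nat \<Rightarrow> real \<Rightarrow> real" and m :: nat and \<alpha> t :: real
  assumes "m \<ge> 1" and "0 < \<alpha>" and "\<alpha> < 1"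
    and "\<forall>k\<in>{1..m}. \<forall>x\<in>{0..1}. 0 \<le> F k x \<and> F k x \<le> 1"
    and "0 \<le> t" and "t \<le> 1"
  shows "(\<forall>l\<in>{1..m}. \<forall>i1 i2. 1 \<le> i1 \<and> i1 \<le> i2 \<and> i2 \<le> nat \<lfloor>\<alpha> * real l\<rfloor> + 1
            \<longrightarrow> Q F m t l i2 \<le> Q F m t l i1)
       \<and> (\<forall>l1 l2 i. 1 \<le> l1 \<and> l1 \<le> l2 \<and> l2 \<le> m \<and> 1 \<le> i
            \<and> i \<le> nat \<lfloor>\<alpha> * real l1\<rfloor> + 1 \<and> i \<le> nat \<lfloor>\<alpha> * real l2\<rfloor> + 1
            \<longrightarrow> Q F m t l2 i \<le> Q F m t l1 i)"
proof (intro conjI ballI allI impI)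
  fix l i1 i2
  assume l: "l \<in> {1..m}" and h: "1 \<le> i1 \<and> i1 \<le> i2 \<and> i2 \<le> nat \<lfloor>\<alpha> * real l\<rfloor> + 1"
  have "i1 \<le> i2 \<Longrightarrow> i2 \<le> nat \<lfloor>\<alpha> * real l\<rfloor> + 1 \<Longrightarrow> Q F m t l i2 \<le> Q F m t l i1"
  proof (induction i2 rule: dec_induct)
    case base then show ?case by simp
  next
    case (step k)
    have "Q F m t l (Suc k) \<le> Q F m t l k"
      using step_i[OF assms(4,5,6,2,3), of l k] l h step by auto
    also have "\<dots> \<le> Q F m t l i1" using step by simp
    finally show ?case .
  qed
  then show "Q F m t l i2 \<le> Q F m t l i1" using h by simp
next
  fix l1 l2 i
  assume h: "1 \<le> l1 \<and> l1 \<le> l2 \<and> l2 \<le> m \<and> 1 \<le> i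
            \<and> i \<le> nat \<lfloor>\<alpha> * real l1\<rfloor> + 1 \<and> i \<le> nat \<lfloor>\<alpha> * real l2\<rfloor> + 1"
  have "l1 \<le> l2 \<Longrightarrow> l2 \<le> m \<Longrightarrow> Q F m t l2 i \<le> Q F m t l1 i"
  proof (induction l2 rule: dec_induct)
    case base then show ?case by simp
  next
    case (step k)
    have "\<lfloor>\<alpha> * real l1\<rfloor> \<le> \<lfloor>\<alpha> * real k\<rfloor>"
      using step(1) assms(2) by (intro floor_mono mult_left_mono) auto
    then have ik: "i \<le> nat \<lfloor>\<alpha> * real k\<rfloor> + 1" using h by linarith
    have "Q F m t (Suc k) i \<le> Q F m t k i"
      using step_l[OF assms(4,5,6,2,3), of k i] ik h step by auto
    also have "\<dots> \<le> Q F m t l1 i" using step by simp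
    finally show ?case .
  qed
  then show "Q F m t l2 i \<le> Q F m t l1 i" using h by simp
qed

end
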